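(* In the type $\mathbb A$ setting described in the context, for all $0\le i\le m-2$ we have $$x_{i+2}=x_1[i+1]\,x_{i+1}-x_i\qquad\text{and}\qquad x_{i+1}[1]=x_1[i+1]\,x_i[1]-x_{i-1}[1],$$ where $x_j=x_j[0]$.
   Context: Let $K$ be a field of characteristic $0$ or $K=\mathbb Z$, let $n\ge1$, $m=n+1$, $p=n$, and $\mathcal F=K(X_1,\dots,X_m)$. Let $B=(b_{ij})\in M_{m,n}(\mathbb Z)$ have $b_{i,i+1}=-1$ for $1\le i\le n-1$, $b_{i+1,i}=1$ for $1\le i\le n$, and all other entries $0$. Let $\mathbf x=(x_1,\dots,x_m)$ be algebraically independent over $K$ in $\mathcal F$. For $1\le k\le n$ the mutation $\mu_k(\mathbf y,C)=(\mathbf y',C')$ of a pair $(\mathbf y,C)$ is given by $c'_{ij}=-c_{ij}$ if $i=k$ or $j=k$, and $c'_{ij}=c_{ij}+\frac{|c_{ik}|c_{kj}+c_{ik}|c_{kj}|}{2}$ otherwise; $y'_s=y_s$ for $s\neq k$ and $y'_k=y_k^{-1}\big(\prod_{c_{ik}>0}y_i^{c_{ik}}+\prod_{c_{ik}<0}y_i^{-c_{ik}}\big)$. Set $(\mathbf x[0],B[0])=(\mathbf x,B)$ and, for $1\le i\le m-1$, $(\mathbf x[i],B[i])=\mu_{m-i}\cdots\mu_2\mu_1(\mathbf x[i-1],B[i-1])$ (apply $\mu_1$ first). Write $\mathbf x[i]=(x_1[i],\dots,x_m[i])$ and use the conventions $x_0[i]=1$, $x_{-1}[i]=0$ for all $i$.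 *)

theory Defs
  imports Main "HOL.Complex_Main"
begin

text \<open>A seed: a cluster vector y (indices 1..m used) and an exchange matrix C
  (rows 1..m, columns 1..n used).\<close>
type_synonym 'a seed = "(nat \<Rightarrow> 'a) \<times> (nat \<Rightarrow> nat \<Rightarrow> int)"

definition mut_matrix :: "nat \<Rightarrow> (nat \<Rightarrow> nat \<Rightarrow> int) \<Rightarrow> (nat \<Rightarrow> nat \<Rightarrow> int)" where
  "mut_matrix k C = (\<lambda>i j. if i = k \<or> j = k then - C i j
      else C i j + (\<bar>C i k\<bar> * C k j + C i k * \<bar>C k j\<bar>) div 2)"

definition mut_vector :: "nat \<Rightarrow> nat \<Rightarrow> (nat \<Rightarrow> 'a::field) \<Rightarrow> (nat \<Rightarrow> nat \<Rightarrow> int) \<Rightarrow> (nat \<Rightarrow> 'a)" where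
  "mut_vector m k y C = (\<lambda>s. if s = k then
      inverse (y k) * ((\<Prod>i\<in>{1..m}. if C i k > 0 then y i ^ nat (C i k) else 1)
                     + (\<Prod>i\<in>{1..m}. if C i k < 0 then y i ^ nat (- C i k) else 1))
    else y s)"

definition mu :: "nat \<Rightarrow> nat \<Rightarrow> 'a::field seed \<Rightarrow> 'a seed" where
  "mu m k S = (mut_vector m k (fst S) (snd S), mut_matrix k (snd S))"

definition mu_seq :: "nat \<Rightarrow> nat list \<Rightarrow> 'a::field seed \<Rightarrow> 'a seed" where
  "mu_seq m ks S = foldl (\<lambda>T k. mu m k T) S ks"

text \<open>The type A exchange matrix B (m = n+1 rows, n columns).\<close>
definition typeA_B :: "nat \<Rightarrow> nat \<Rightarrow> nat \<Rightarrow> int" where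
  "typeA_B n i j = (if 1 \<le> i \<and> i \<le> n - 1 \<and> j = i + 1 then -1
                    else if 1 \<le> j \<and> j \<le> n \<and> i = j + 1 then 1 else 0)"

text \<open>(x[i], B[i]): seed 0 = (x,B); seed (i+1) = \<mu>_{m-(i+1)} ... \<mu>_2 \<mu>_1 (seed i), m = n+1.\<close>
fun seedA :: "nat \<Rightarrow> (nat \<Rightarrow> 'a::field) \<Rightarrow> nat \<Rightarrow> 'a seed" where
  "seedA n x 0 = (x, typeA_B n)"
| "seedA n x (Suc i) = mu_seq (n + 1) [1..<(n + 1) - i] (seedA n x i)"

text \<open>x_j[i] with conventions x_0[i] = 1, x_{-1}[i] = 0.\<close>
definition xA :: "nat \<Rightarrow> (nat \<Rightarrow> 'a::field) \<Rightarrow> int \<Rightarrow> nat \<Rightarrow> 'a" where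
  "xA n x j i = (if j = 0 then 1 else if j = -1 then 0 else fst (seedA n x i) (nat j))"

text \<open>K is a subring (contains 1, closed under +, -, *): covers both a subfield and (the image of) \<int>.\<close>
definition subring_set :: "'a::comm_ring_1 set \<Rightarrow> bool" where
  "subring_set K \<longleftrightarrow> 1 \<in> K \<and> (\<forall>a\<in>K. \<forall>b\<in>K. a + b \<in> K \<and> a - b \<in> K \<and> a * b \<in> K)"

text \<open>x_1..x_m algebraically independent over K: no nontrivial polynomial relation
  with coefficients in K (monomials = exponent vectors supported on {1..m}).\<close>
definition alg_indep :: "'a::comm_ring_1 set \<Rightarrow> nat \<Rightarrow> (nat \<Rightarrow> 'a) \<Rightarrow> bool" where
  "alg_indep K m x \<longleftrightarrow>
    (\<forall>c :: (nat \<Rightarrow> nat) \<Rightarrow> 'a.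
       finite {\<alpha>. c \<alpha> \<noteq> 0} \<and> (\<forall>\<alpha>. c \<alpha> \<in> K) \<and>
       (\<forall>\<alpha>. c \<alpha> \<noteq> 0 \<longrightarrow> (\<forall>i. i \<notin> {1..m} \<longrightarrow> \<alpha> i = 0)) \<and>
       (\<Sum>\<alpha>\<in>{\<alpha>. c \<alpha> \<noteq> 0}. c \<alpha> * (\<Prod>i\<in>{1..m}. x i ^ \<alpha> i)) = 0
       \<longrightarrow> (\<forall>\<alpha>. c \<alpha> = 0))"

end

theory Submission imports Defs begin


definition MA :: "nat \<Rightarrow> (nat \<Rightarrow> int) \<Rightarrow> nat \<Rightarrow> nat \<Rightarrow> int" where
 "MA n s i j = (if 1 \<le> i \<and> i + 1 \<le> n \<and> j = i+1 then - s i
    else if 1 \<le> j \<and> j \<le> n \<and> i = j+1 then s j else 0)"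

lemma MA_cong: "(\<And>j. 1 \<le> j \<Longrightarrow> j \<le> n \<Longrightarrow> s j = s' j) \<Longrightarrow> MA n s = MA n s'"
  by (intro ext) (auto simp: MA_def)

lemma typeA_MA: "typeA_B n = MA n (\<lambda>_. 1)"
  by (intro ext) (auto simp: MA_def typeA_B_def)

lemma MA_col: "1 \<le> k \<Longrightarrow> k \<le> n \<Longrightarrow> i \<noteq> k \<Longrightarrow>
   MA n s i k = (if i + 1 = k \<and> 1 \<le> i then - s i else if i = k+1 then s k else 0)"
  unfolding MA_def by auto

lemma MA_row: "1 \<le> k \<Longrightarrow> k \<le> n \<Longrightarrow> j \<noteq> k \<Longrightarrow>
   MA n s k j = (if j = k + 1 \<and> k + 1 \<le> n then - s k else if j + 1 = k \<and> 1 \<le> j then s j else 0)"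
  unfolding MA_def by auto

lemma MA_diag: "MA n s k k = 0" unfolding MA_def by auto

lemma MA_off: "i \<noteq> k \<Longrightarrow> j \<noteq> k \<Longrightarrow> (\<And>l. l \<noteq> k \<Longrightarrow> l + 1 \<noteq> k \<Longrightarrow> s' l = s l) \<Longrightarrow> MA n s' i j = MA n s i j"
proof -
  assume a: "i \<noteq> k" "j \<noteq> k" and h: "\<And>l. l \<noteq> k \<Longrightarrow> l + 1 \<noteq> k \<Longrightarrow> s' l = s l"
  have 1: "j = i + 1 \<Longrightarrow> s' i = s i" using a h by blast
  have 2: "i = j + 1 \<Longrightarrow> s' j = s j" using a h by blast
  show ?thesis unfolding MA_def using 1 2 by presburger
qed

lemma mut_MA:
  assumes k: "1 \<le> k" "k \<le> n"
    and s: "\<And>j. s j = 1 \<or> s j = -1"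
    and c: "k = 1 \<or> s (k-1) = - s k"
    and s1: "\<And>l. l \<noteq> k \<Longrightarrow> l + 1 \<noteq> k \<Longrightarrow> s' l = s l"
    and s2: "s' k = - s k" and s3: "\<And>l. l + 1 = k \<Longrightarrow> 1 \<le> l \<Longrightarrow> s' l = - s l"
  shows "mut_matrix k (MA n s) = MA n s'"
proof (intro ext)
  fix i j
  show "mut_matrix k (MA n s) i j = MA n s' i j"
  proof (cases "i = k \<or> j = k")
    case True
    then show ?thesis
    proof
      assume i: "i = k"
      show ?thesis
      proof (cases "j = k")
        case True then show ?thesis using i by (simp add: mut_matrix_def MA_diag)
      next
        case False then show ?thesis using i k
          by (simp add: mut_matrix_def MA_row s2 s3)
      qed
    next
      assume j: "j = k"
      show ?thesis
      proof (cases "i = k")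
        case True then show ?thesis using j by (simp add: mut_matrix_def MA_diag)
      next
        case False then show ?thesis using j k
          by (simp add: mut_matrix_def MA_col s2 s3)
      qed
    qed
  next
    case False
    have corr: "(\<bar>MA n s i k\<bar> * MA n s k j + MA n s i k * \<bar>MA n s k j\<bar>) div 2 = 0"
    proof -
      define a where "a = MA n s i k"
      define b where "b = MA n s k j"
      have ea: "a = (if i + 1 = k \<and> 1 \<le> i then - s i else if i = k+1 then s k else 0)"
        unfolding a_def using MA_col[OF k] False by blast
      have eb: "b = (if j = k + 1 \<and> k + 1 \<le> n then - s k else if j + 1 = k \<and> 1 \<le> j then s j else 0)"
        unfolding b_def using MA_row[OF k] False by blast
      have sq: "\<And>l. s l * s l = 1" using s by (metis mult_1 mult_minus1 minus_minus)
      have ab: "a * b \<le> 0"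
      proof -
        have "a = 0 \<or> b = 0 \<or> a * b = - 1"
        proof (cases "i + 1 = k \<and> 1 \<le> i")
          case T1: True
          hence c': "s i = - s k" using c by auto
          show ?thesis
          proof (cases "j = k + 1 \<and> k + 1 \<le> n")
            case True then show ?thesis using T1 ea eb c' sq by simp
          next
            case False then show ?thesis using T1 ea eb c' sq by auto
          qed
        next
          case F1: False
          show ?thesis
          proof (cases "i = k+1")
            case T2: True
            show ?thesis
            proof (cases "j = k + 1 \<and> k + 1 \<le> n")
              case True then show ?thesis using F1 T2 ea eb sq by simp
            next
              case F3: False
              show ?thesis
              proof (cases "j + 1 = k \<and> 1 \<le> j")
                case True
                hence "s j = - s k" using c by auto
                then show ?thesis using F1 T2 F3 True ea eb sq by simp
              next
                case False2: False
                then show ?thesis using F1 T2 F3 False2 ea eb sq by auto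
              qed
            qed
          next
            case False hence "a = 0" using F1 ea by auto then show ?thesis by simp
          qed
        qed
        then show ?thesis by auto
      qed
      have "\<bar>a\<bar> * b + a * \<bar>b\<bar> = 0" using ab
        by (cases "a \<ge> 0"; cases "b \<ge> 0") (auto simp: mult_le_0_iff)
      then show ?thesis unfolding a_def b_def by simp
    qed
    have "MA n s' i j = MA n s i j" using False by (intro MA_off s1) auto
    then show ?thesis using False corr unfolding mut_matrix_def
      by simp
  qed
qed
lemma mut_vec:
  fixes y :: "nat \<Rightarrow> 'a::field"
  assumes k: "1 \<le> k" "k \<le> n" and hs: "2 \<le> k \<Longrightarrow> s (k-1) = -1" and hk: "s k = 1"
  shows "mut_vector (n+1) k y (MA n s) =
     y(k := inverse (y k) * ((if k = 1 then 1 else y (k-1)) * y (k+1) + 1))"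
proof -
  have val: "\<And>i. MA n s i k = (if (i + 1 = k \<and> 1 \<le> i) \<or> i = k + 1 then 1 else 0)"
  proof -
    fix i
    show "MA n s i k = (if (i + 1 = k \<and> 1 \<le> i) \<or> i = k + 1 then 1 else 0)"
    proof (cases "i = k")
      case True then show ?thesis by (simp add: MA_diag)
    next
      case False
      have "i + 1 = k \<Longrightarrow> 1 \<le> i \<Longrightarrow> s i = -1" using hs by (metis add_diff_cancel_right' add_le_mono1 one_add_one)
      then show ?thesis using MA_col[OF k False, of s] hk by auto
    qed
  qed
  have P: "(\<Prod>i\<in>{1..n+1}. if MA n s i k > 0 then y i ^ nat (MA n s i k) else 1)
        = (\<Prod>i\<in>{i\<in>{1..n+1}. (i + 1 = k \<and> 1 \<le> i) \<or> i = k + 1}. y i)"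
    by (subst prod.inter_filter[symmetric]) (auto simp: val intro!: prod.cong)
  have set: "{i\<in>{1..n+1}. (i + 1 = k \<and> 1 \<le> i) \<or> i = k + 1} = (if k = 1 then {k+1} else {k-1, k+1})"
    using k by auto
  have P2: "(\<Prod>i\<in>{1..n+1}. if MA n s i k > 0 then y i ^ nat (MA n s i k) else 1)
        = (if k = 1 then 1 else y (k-1)) * y (k+1)"
    unfolding P set using k by auto
  have N: "(\<Prod>i\<in>{1..n+1}. if MA n s i k < 0 then y i ^ nat (- MA n s i k) else 1) = 1"
    by (rule prod.neutral) (auto simp: val)
  show ?thesis unfolding mut_vector_def P2 N by (intro ext) auto
qed

fun rnd :: "(nat \<Rightarrow> 'a::field) \<Rightarrow> nat \<Rightarrow> nat \<Rightarrow> 'a" where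
  "rnd y 0 = y"
| "rnd y (Suc k) = (rnd y k)(Suc k := inverse (rnd y k (Suc k)) *
      ((if k = 0 then 1 else rnd y k k) * rnd y k (Suc (Suc k)) + 1))"

lemma rnd_out: "k < j \<Longrightarrow> rnd y k j = y j"
  by (induction k) auto

lemma rnd_in: "1 \<le> j \<Longrightarrow> j \<le> k \<Longrightarrow>
   rnd y k j = inverse (y j) * ((if j = 1 then 1 else rnd y k (j-1)) * y (j+1) + 1)"
proof (induction k)
  case 0 then show ?case by simp
next
  case (Suc k)
  show ?case
  proof (cases "j = Suc k")
    case True
    then show ?thesis by (auto simp: rnd_out)
  next
    case False
    then have "j \<le> k" using Suc by auto
    then show ?thesis using Suc False by auto
  qed
qed

lemma mu_seq_snoc: "mu_seq m (ks @ [k]) S = mu m k (mu_seq m ks S)"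
  by (simp add: mu_seq_def)

definition sg :: "nat \<Rightarrow> nat \<Rightarrow> nat \<Rightarrow> int" where
  "sg n r j = (if n + 1 - r \<le> j then -1 else 1)"

definition sk :: "nat \<Rightarrow> nat \<Rightarrow> nat \<Rightarrow> nat \<Rightarrow> int" where
  "sk n r k j = (if j < k then 1 else if j = k \<and> 1 \<le> k then -1 else sg n r j)"

lemma round:
  fixes y :: "nat \<Rightarrow> 'a::field"
  assumes r: "r < n"
  shows "k \<le> n - r \<Longrightarrow> mu_seq (n+1) [1..<Suc k] (y, MA n (sg n r)) = (rnd y k, MA n (sk n r k))"
proof (induction k)
  case 0
  have "sk n r 0 = sg n r" by (intro ext) (simp add: sk_def)
  then show ?case by (simp add: mu_seq_def)
next
  case (Suc k)
  have IH: "mu_seq (n+1) [1..<Suc k] (y, MA n (sg n r)) = (rnd y k, MA n (sk n r k))"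
    using Suc by auto
  have kn: "Suc k \<le> n" using Suc r by auto
  have sgk: "sk n r k (Suc k) = 1" using Suc r by (auto simp: sk_def sg_def)
  have sgk': "2 \<le> Suc k \<Longrightarrow> sk n r k (Suc k - 1) = -1" by (auto simp: sk_def)
  have V: "mut_vector (n+1) (Suc k) (rnd y k) (MA n (sk n r k)) = rnd y (Suc k)"
  proof -
    have "mut_vector (n+1) (Suc k) (rnd y k) (MA n (sk n r k)) = (rnd y k)(Suc k := inverse (rnd y k (Suc k)) * ((if Suc k = 1 then 1 else rnd y k (Suc k - 1)) * rnd y k (Suc k + 1) + 1))"
      by (rule mut_vec[OF _ kn sgk' sgk]) simp
    moreover have "rnd y (Suc k) = (rnd y k)(Suc k := inverse (rnd y k (Suc k)) * ((if Suc k = 1 then 1 else rnd y k (Suc k - 1)) * rnd y k (Suc k + 1) + 1))"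
      by simp
    ultimately show ?thesis by (simp only:)
  qed
  have M: "mut_matrix (Suc k) (MA n (sk n r k)) = MA n (sk n r (Suc k))"
  proof (rule mut_MA)
    show "1 \<le> Suc k" "Suc k \<le> n" using kn by auto
    show "\<And>j. sk n r k j = 1 \<or> sk n r k j = -1" by (auto simp: sk_def sg_def)
    show "Suc k = 1 \<or> sk n r k (Suc k - 1) = - sk n r k (Suc k)" using sgk sgk' by (cases k) auto
    show "\<And>l. l \<noteq> Suc k \<Longrightarrow> l + 1 \<noteq> Suc k \<Longrightarrow> sk n r (Suc k) l = sk n r k l"
      by (auto simp: sk_def)
    show "sk n r (Suc k) (Suc k) = - sk n r k (Suc k)" using sgk by (simp add: sk_def)
    show "\<And>l. l + 1 = Suc k \<Longrightarrow> 1 \<le> l \<Longrightarrow> sk n r (Suc k) l = - sk n r k l"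
      by (auto simp: sk_def)
  qed
  have "[1..<Suc (Suc k)] = [1..<Suc k] @ [Suc k]" by simp
  then show ?case by (simp only: mu_seq_snoc IH mu_def fst_conv snd_conv V M)
qed

lemma seedA_step:
  assumes r: "r < n" and h: "snd (seedA n x r) = MA n (sg n r)"
  shows "seedA n x (Suc r) = (rnd (fst (seedA n x r)) (n-r), MA n (sg n (Suc r)))"
proof -
  have e: "seedA n x r = (fst (seedA n x r), MA n (sg n r))" using h by (metis prod.collapse)
  have l: "[1..<(n+1) - r] = [1..<Suc (n - r)]" using r by (simp add: Suc_diff_le)
  have c: "MA n (sk n r (n-r)) = MA n (sg n (Suc r))"
    by (rule MA_cong) (auto simp: sk_def sg_def)
  show ?thesis
    apply (subst seedA.simps)
    apply (subst e)
    apply (subst l)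
    using round[OF r, of "n-r" "fst (seedA n x r)"] c by simp
qed

lemma seedA_snd: "r \<le> n \<Longrightarrow> snd (seedA n x r) = MA n (sg n r)"
proof (induction r)
  case 0
  show ?case by (simp add: typeA_MA) (rule MA_cong, simp add: sg_def)
next
  case (Suc r)
  then show ?case using seedA_step[of r n x] by simp
qed

lemma seedA_fst: "r < n \<Longrightarrow> fst (seedA n x (Suc r)) = rnd (fst (seedA n x r)) (n-r)"
  using seedA_step[of r n x] seedA_snd[of r n x] by simp

lemma F1: "r < n \<Longrightarrow> 1 \<le> k \<Longrightarrow> k \<le> n - r \<Longrightarrow>
  fst (seedA n x (Suc r)) k = inverse (fst (seedA n x r) k) *
    ((if k = 1 then 1 else fst (seedA n x (Suc r)) (k-1)) * fst (seedA n x r) (k+1) + 1)"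
  unfolding seedA_fst by (rule rnd_in)


definition mono :: "nat \<Rightarrow> (nat \<Rightarrow> 'a::comm_ring_1) \<Rightarrow> (nat \<Rightarrow> nat) \<Rightarrow> 'a" where
  "mono m x \<alpha> = (\<Prod>i\<in>{1..m}. x i ^ \<alpha> i)"

definition npos :: "nat \<Rightarrow> (nat \<Rightarrow> 'a::comm_ring_1) \<Rightarrow> 'a \<Rightarrow> bool" where
  "npos m x z \<longleftrightarrow> (\<exists>A c. finite A \<and> A \<noteq> {} \<and> (\<forall>\<alpha>\<in>A. 0 < (c \<alpha> :: nat) \<and> (\<forall>i. i \<notin> {1..m} \<longrightarrow> \<alpha> i = 0))
      \<and> z = (\<Sum>\<alpha>\<in>A. of_nat (c \<alpha>) * mono m x \<alpha>))"

lemma of_nat_in: "subring_set K \<Longrightarrow> of_nat k \<in> K"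
proof (induction k)
  case 0 then show ?case unfolding subring_set_def by (metis diff_self of_nat_0)
next
  case (Suc k) then show ?case unfolding subring_set_def by (metis of_nat_Suc add.commute)
qed

lemma npos_nz:
  fixes x :: "nat \<Rightarrow> 'a::field_char_0"
  assumes K: "subring_set K" and ai: "alg_indep K m x" and p: "npos m x z"
  shows "z \<noteq> 0"
proof
  assume z0: "z = 0"
  obtain A c where A: "finite A" "A \<noteq> {}" "\<forall>\<alpha>\<in>A. 0 < (c \<alpha> :: nat) \<and> (\<forall>i. i \<notin> {1..m} \<longrightarrow> \<alpha> i = 0)"
    and z: "z = (\<Sum>\<alpha>\<in>A. of_nat (c \<alpha>) * mono m x \<alpha>)"
    using p unfolding npos_def by blast
  define c' where "c' \<alpha> = (if \<alpha> \<in> A then (of_nat (c \<alpha>) :: 'a) else 0)" for \<alpha>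
  have S: "{\<alpha>. c' \<alpha> \<noteq> 0} = A" using A(3) by (auto simp: c'_def)
  have "(\<Sum>\<alpha>\<in>{\<alpha>. c' \<alpha> \<noteq> 0}. c' \<alpha> * (\<Prod>i\<in>{1..m}. x i ^ \<alpha> i)) = z"
    unfolding S z by (rule sum.cong) (auto simp: c'_def mono_def)
  moreover have "finite {\<alpha>. c' \<alpha> \<noteq> 0}" using S A by simp
  moreover have "\<forall>\<alpha>. c' \<alpha> \<in> K" using of_nat_in[OF K] K by (auto simp: c'_def subring_set_def) (metis diff_self)
  moreover have "\<forall>\<alpha>. c' \<alpha> \<noteq> 0 \<longrightarrow> (\<forall>i. i \<notin> {1..m} \<longrightarrow> \<alpha> i = 0)" using S A(3) by blast
  ultimately have "\<forall>\<alpha>. c' \<alpha> = 0" using ai z0 unfolding alg_indep_def by blast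
  then show False using S A(2) by auto
qed

lemma npos_one: "npos m x 1"
  unfolding npos_def
  by (rule exI[of _ "{\<lambda>_. 0}"], rule exI[of _ "\<lambda>_. 1"]) (simp add: mono_def)

lemma npos_var: "1 \<le> i \<Longrightarrow> i \<le> m \<Longrightarrow> npos m x (x i)"
  unfolding npos_def
proof (rule exI[of _ "{\<lambda>j. if j = i then 1 else 0}"], rule exI[of _ "\<lambda>_. 1"])
  assume i: "1 \<le> i" "i \<le> m"
  have "mono m x (\<lambda>j. if j = i then 1 else 0) = (\<Prod>j\<in>{1..m}. if j = i then x j else 1)"
    unfolding mono_def by (rule prod.cong) auto
  also have "\<dots> = x i" using i by (simp add: prod.delta)
  finally show "finite {\<lambda>j. if j = i then 1 else 0} \<and> {\<lambda>j. if j = i then 1 else 0} \<noteq> {} \<and>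
    (\<forall>\<alpha>\<in>{\<lambda>j. if j = i then 1 else 0}. 0 < (1::nat) \<and> (\<forall>ia. ia \<notin> {1..m} \<longrightarrow> \<alpha> ia = 0)) \<and>
    x i = (\<Sum>\<alpha>\<in>{\<lambda>j. if j = i then 1 else 0}. of_nat 1 * mono m x \<alpha>)"
    using i by auto
qed

lemma npos_add: assumes "npos m x p" "npos m x q" shows "npos m x (p + q)"
proof -
  obtain A c where A: "finite A" "A \<noteq> {}" "\<forall>\<alpha>\<in>A. 0 < (c \<alpha> :: nat) \<and> (\<forall>i. i \<notin> {1..m} \<longrightarrow> \<alpha> i = 0)"
    and p: "p = (\<Sum>\<alpha>\<in>A. of_nat (c \<alpha>) * mono m x \<alpha>)"
    using assms(1) unfolding npos_def by blast
  obtain B d where B: "finite B" "B \<noteq> {}" "\<forall>\<alpha>\<in>B. 0 < (d \<alpha> :: nat) \<and> (\<forall>i. i \<notin> {1..m} \<longrightarrow> \<alpha> i = 0)"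
    and q: "q = (\<Sum>\<alpha>\<in>B. of_nat (d \<alpha>) * mono m x \<alpha>)"
    using assms(2) unfolding npos_def by blast
  define e where "e \<alpha> = (if \<alpha> \<in> A then c \<alpha> else 0) + (if \<alpha> \<in> B then d \<alpha> else 0)" for \<alpha>
  have "(\<Sum>\<alpha>\<in>A \<union> B. of_nat (e \<alpha>) * mono m x \<alpha>) =
     (\<Sum>\<alpha>\<in>A \<union> B. if \<alpha> \<in> A then of_nat (c \<alpha>) * mono m x \<alpha> else 0) +
     (\<Sum>\<alpha>\<in>A \<union> B. if \<alpha> \<in> B then of_nat (d \<alpha>) * mono m x \<alpha> else 0)"
    unfolding sum.distrib[symmetric] by (rule sum.cong) (auto simp: e_def distrib_right)
  also have "\<dots> = p + q"
    unfolding p q using A(1) B(1)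
    by (simp add: sum.inter_restrict[symmetric] Int_absorb1 Int_absorb2)
  finally have "p + q = (\<Sum>\<alpha>\<in>A \<union> B. of_nat (e \<alpha>) * mono m x \<alpha>)" by simp
  moreover have "\<forall>\<alpha>\<in>A \<union> B. 0 < e \<alpha> \<and> (\<forall>i. i \<notin> {1..m} \<longrightarrow> \<alpha> i = 0)"
    using A(3) B(3) by (auto simp: e_def)
  ultimately show ?thesis unfolding npos_def using A B
    by (intro exI[of _ "A \<union> B"] exI[of _ e]) auto
qed

lemma mono_add: "mono m x (\<lambda>j. \<alpha> j + \<beta> j) = mono m x \<alpha> * mono m x \<beta>"
  unfolding mono_def by (simp add: power_add prod.distrib)

lemma npos_mult: assumes "npos m x p" "npos m x q" shows "npos m x (p * q)"
proof -
  obtain A c where A: "finite A" "A \<noteq> {}" "\<forall>\<alpha>\<in>A. 0 < (c \<alpha> :: nat) \<and> (\<forall>i. i \<notin> {1..m} \<longrightarrow> \<alpha> i = 0)"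
    and p: "p = (\<Sum>\<alpha>\<in>A. of_nat (c \<alpha>) * mono m x \<alpha>)"
    using assms(1) unfolding npos_def by blast
  obtain B d where B: "finite B" "B \<noteq> {}" "\<forall>\<alpha>\<in>B. 0 < (d \<alpha> :: nat) \<and> (\<forall>i. i \<notin> {1..m} \<longrightarrow> \<alpha> i = 0)"
    and q: "q = (\<Sum>\<alpha>\<in>B. of_nat (d \<alpha>) * mono m x \<alpha>)"
    using assms(2) unfolding npos_def by blast
  define h where "h = (\<lambda>(\<alpha>::nat\<Rightarrow>nat, \<beta>::nat\<Rightarrow>nat). (\<lambda>j. \<alpha> j + \<beta> j))"
  define g where "g = (\<lambda>(\<alpha>, \<beta>). of_nat (c \<alpha> * d \<beta>) * mono m x (h (\<alpha>, \<beta>)))"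
  define C where "C = h ` (A \<times> B)"
  define e where "e \<gamma> = (\<Sum>pr\<in>{pr. pr \<in> A \<times> B \<and> h pr = \<gamma>}. c (fst pr) * d (snd pr))" for \<gamma>
  have fin: "finite (A \<times> B)" using A B by simp
  have "p * q = (\<Sum>\<alpha>\<in>A. \<Sum>\<beta>\<in>B. g (\<alpha>, \<beta>))"
    unfolding p q sum_product g_def h_def by (simp add: mono_add mult_ac)
  also have "\<dots> = sum g (A \<times> B)" by (simp add: sum.cartesian_product)
  also have "\<dots> = (\<Sum>\<gamma>\<in>C. sum g {pr. pr \<in> A \<times> B \<and> h pr = \<gamma>})"
    unfolding C_def by (rule sum.image_gen[OF fin])
  also have "\<dots> = (\<Sum>\<gamma>\<in>C. of_nat (e \<gamma>) * mono m x \<gamma>)"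
  proof (rule sum.cong[OF refl])
    fix \<gamma> assume "\<gamma> \<in> C"
    have "sum g {pr. pr \<in> A \<times> B \<and> h pr = \<gamma>} =
        (\<Sum>pr\<in>{pr. pr \<in> A \<times> B \<and> h pr = \<gamma>}. of_nat (c (fst pr) * d (snd pr)) * mono m x \<gamma>)"
      by (rule sum.cong) (auto simp: g_def)
    also have "\<dots> = of_nat (e \<gamma>) * mono m x \<gamma>"
      unfolding e_def by (simp add: sum_distrib_right)
    finally show "sum g {pr. pr \<in> A \<times> B \<and> h pr = \<gamma>} = of_nat (e \<gamma>) * mono m x \<gamma>" .
  qed
  finally have eq: "p * q = (\<Sum>\<gamma>\<in>C. of_nat (e \<gamma>) * mono m x \<gamma>)" .
  have pos: "\<forall>\<gamma>\<in>C. 0 < e \<gamma> \<and> (\<forall>i. i \<notin> {1..m} \<longrightarrow> \<gamma> i = 0)"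
  proof
    fix \<gamma> assume g: "\<gamma> \<in> C"
    then obtain a b where ab: "a \<in> A" "b \<in> B" "\<gamma> = h (a, b)" unfolding C_def by auto
    have "finite {pr. pr \<in> A \<times> B \<and> h pr = \<gamma>}" using fin by simp
    moreover have "(a, b) \<in> {pr. pr \<in> A \<times> B \<and> h pr = \<gamma>}" using ab by auto
    moreover have "\<forall>pr\<in>{pr. pr \<in> A \<times> B \<and> h pr = \<gamma>}. 0 < c (fst pr) * d (snd pr)"
      using A(3) B(3) by auto
    ultimately have "0 < e \<gamma>" unfolding e_def
      by (metis (no_types, lifting) empty_iff sum_pos)
    moreover have "\<forall>i. i \<notin> {1..m} \<longrightarrow> \<gamma> i = 0" using ab A(3) B(3) by (auto simp: h_def)
    ultimately show "0 < e \<gamma> \<and> (\<forall>i. i \<notin> {1..m} \<longrightarrow> \<gamma> i = 0)" by simp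
  qed
  have "finite C" "C \<noteq> {}" using fin A B unfolding C_def by auto
  then show ?thesis unfolding npos_def using eq pos by blast
qed



definition rpos :: "nat \<Rightarrow> (nat \<Rightarrow> 'a::field) \<Rightarrow> 'a \<Rightarrow> bool" where
  "rpos m x z \<longleftrightarrow> (\<exists>p q. npos m x p \<and> npos m x q \<and> z = p / q)"

definition FF :: "nat \<Rightarrow> (nat \<Rightarrow> 'a::field) \<Rightarrow> nat \<Rightarrow> nat \<Rightarrow> 'a" where
  "FF n x u v = xA n x (int v - int u) u"

lemma FF_diag: "FF n x u u = 1" by (simp add: FF_def xA_def)
lemma FF_sub: "FF n x (Suc u) u = 0" by (simp add: FF_def xA_def)
lemma FF_gt: "u < v \<Longrightarrow> FF n x u v = fst (seedA n x u) (v - u)"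
  by (simp add: FF_def xA_def nat_diff_distrib)

context
  fixes K :: "'a::field_char_0 set" and n :: nat and x :: "nat \<Rightarrow> 'a"
  assumes K: "subring_set K" and ai: "alg_indep K (n + 1) x"
begin

lemma rpos_nz: "rpos (n+1) x z \<Longrightarrow> z \<noteq> 0"
  unfolding rpos_def using npos_nz[OF K ai] by auto

lemma rpos_one: "rpos (n+1) x 1"
  unfolding rpos_def using npos_one[of "n+1" x] by (intro exI[of _ 1]) simp

lemma rpos_var: "1 \<le> k \<Longrightarrow> k \<le> n + 1 \<Longrightarrow> rpos (n+1) x (x k)"
proof -
  assume "1 \<le> k" "k \<le> n + 1"
  then have "npos (n+1) x (x k)" by (rule npos_var)
  then show ?thesis unfolding rpos_def using npos_one[of "n+1" x] by (intro exI[of _ "x k"] exI[of _ 1]) simp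
qed

lemma rpos_mult: "rpos (n+1) x a \<Longrightarrow> rpos (n+1) x b \<Longrightarrow> rpos (n+1) x (a * b)"
proof -
  assume "rpos (n+1) x a" "rpos (n+1) x b"
  then obtain p q p' q' where h: "npos (n+1) x p" "npos (n+1) x q" "npos (n+1) x p'" "npos (n+1) x q'"
    and a: "a = p / q" and b: "b = p' / q'" unfolding rpos_def by blast
  have "a * b = (p * p') / (q * q')" unfolding a b by simp
  moreover have "npos (n+1) x (p * p')" "npos (n+1) x (q * q')" using h by (auto intro: npos_mult)
  ultimately show ?thesis unfolding rpos_def by blast
qed

lemma rpos_add: "rpos (n+1) x a \<Longrightarrow> rpos (n+1) x b \<Longrightarrow> rpos (n+1) x (a + b)"
proof -
  assume "rpos (n+1) x a" "rpos (n+1) x b"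
  then obtain p q p' q' where h: "npos (n+1) x p" "npos (n+1) x q" "npos (n+1) x p'" "npos (n+1) x q'"
    and a: "a = p / q" and b: "b = p' / q'" unfolding rpos_def by blast
  have "q \<noteq> 0" "q' \<noteq> 0" using h npos_nz[OF K ai] by auto
  then have "a + b = (p * q' + p' * q) / (q * q')" unfolding a b by (simp add: add_frac_eq)
  moreover have "npos (n+1) x (p * q' + p' * q)" using h by (intro npos_add npos_mult)
  moreover have "npos (n+1) x (q * q')" using h by (intro npos_mult)
  ultimately show ?thesis unfolding rpos_def by blast
qed

lemma rpos_inv: "rpos (n+1) x a \<Longrightarrow> rpos (n+1) x (inverse a)"
proof -
  assume "rpos (n+1) x a"
  then obtain p q where h: "npos (n+1) x p" "npos (n+1) x q" and a: "a = p / q" unfolding rpos_def by blast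
  have "inverse a = q / p" unfolding a by simp
  then show ?thesis unfolding rpos_def using h by blast
qed

lemma apos: "r \<le> n \<Longrightarrow> 1 \<le> k \<Longrightarrow> k \<le> n + 1 - r \<Longrightarrow> rpos (n+1) x (fst (seedA n x r) k)"
proof (induction r arbitrary: k)
  case 0 then show ?case using rpos_var[of k] by simp
next
  case (Suc r)
  note outer = Suc.IH
  have r: "r < n" using Suc by simp
  have "1 \<le> k \<longrightarrow> k \<le> n - r \<longrightarrow> rpos (n+1) x (fst (seedA n x (Suc r)) k)" for k
  proof (induction k)
    case 0 then show ?case by simp
  next
    case (Suc k)
    show ?case
    proof (intro impI)
      assume k: "1 \<le> Suc k" "Suc k \<le> n - r"
      have a1: "rpos (n+1) x (fst (seedA n x r) (Suc k))" using outer k r by simp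
      have a2: "rpos (n+1) x (fst (seedA n x r) (Suc k + 1))" using outer k r by simp
      have a3: "rpos (n+1) x (if Suc k = 1 then 1 else fst (seedA n x (Suc r)) (Suc k - 1))"
        using Suc.IH k rpos_one by auto
      show "rpos (n+1) x (fst (seedA n x (Suc r)) (Suc k))"
        unfolding F1[OF r k]
        by (intro rpos_mult rpos_inv rpos_add rpos_one a1 a2 a3)
    qed
  qed
  then show ?case using Suc.prems by simp
qed

lemma a_nz: "r \<le> n \<Longrightarrow> 1 \<le> k \<Longrightarrow> k \<le> n + 1 - r \<Longrightarrow> fst (seedA n x r) k \<noteq> 0"
  using apos rpos_nz by blast

lemma DD: assumes uv: "u \<le> v" "v \<le> n"
  shows "FF n x (u+1) (v+1) * FF n x u v - FF n x (u+1) v * FF n x u (v+1) = 1"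
proof (cases "u = v")
  case True then show ?thesis by (simp add: FF_diag FF_sub)
next
  case False
  then have uv': "u < v" using uv by simp
  define k where "k = v - u"
  have k: "1 \<le> k" "k \<le> n - u" and u: "u < n" using uv uv' by (auto simp: k_def)
  have e1: "FF n x (u+1) (v+1) = fst (seedA n x (Suc u)) k" using uv' by (simp add: FF_gt k_def)
  have e2: "FF n x u v = fst (seedA n x u) k" using uv' by (simp add: FF_gt k_def)
  have e3: "FF n x u (v+1) = fst (seedA n x u) (k+1)" using uv' by (simp add: FF_gt k_def Suc_diff_le)
  have e4: "FF n x (u+1) v = (if k = 1 then 1 else fst (seedA n x (Suc u)) (k-1))"
  proof (cases "k = 1")
    case True then have "v = u + 1" using uv' k_def by simp
    then show ?thesis using True by (simp add: FF_diag)
  next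
    case False then have "u + 1 < v" using uv' k_def k by simp
    then show ?thesis using False by (simp add: FF_gt k_def)
  qed
  have nz: "fst (seedA n x u) k \<noteq> 0" using a_nz u k by simp
  show ?thesis unfolding e1 e2 e3 e4 F1[OF u k] using nz
    by (simp add: field_simps)
qed

lemma NZ: "u + 1 \<le> v \<Longrightarrow> v \<le> n \<Longrightarrow> FF n x (u+1) v \<noteq> 0"
proof (cases "v = u + 1")
  case True then show ?thesis by (simp add: FF_diag)
next
  case False
  assume "u + 1 \<le> v" "v \<le> n"
  then have "u + 1 < v" using False by simp
  then show ?thesis using a_nz[of "u+1" "v - (u+1)"] \<open>v \<le> n\<close> by (simp add: FF_gt)
qed

lemma GG: assumes v: "1 \<le> v" "v \<le> n"
  shows "d \<le> v \<Longrightarrow> FF n x (v - d) (v+1) + FF n x (v - d) (v-1) = FF n x v (v+1) * FF n x (v - d) v"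
proof (induction d)
  case 0
  have "FF n x v (v - 1) = 0" using v FF_sub[of n x "v-1"] by simp
  then show ?case by (simp add: FF_diag)
next
  case (Suc d)
  define u where "u = v - Suc d"
  have u1: "u + 1 = v - d" and uv: "u < v" using Suc.prems v by (auto simp: u_def)
  define c where "c = FF n x v (v+1)"
  have IH: "FF n x (u+1) (v+1) + FF n x (u+1) (v-1) = c * FF n x (u+1) v"
    using Suc u1 by (simp add: c_def)
  have D1: "FF n x (u+1) (v+1) * FF n x u v - FF n x (u+1) v * FF n x u (v+1) = 1"
    using DD uv v by simp
  have D2: "FF n x (u+1) v * FF n x u (v-1) - FF n x (u+1) (v-1) * FF n x u v = 1"
    using DD[of u "v-1"] uv v by simp
  have P: "FF n x (u+1) v \<noteq> 0" using NZ uv v by simp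
  have "FF n x (u+1) v * (FF n x u (v+1) + FF n x u (v-1)) =
     FF n x (u+1) v * (c * FF n x u v)"
  proof -
    have "FF n x (u+1) v * (FF n x u (v+1) + FF n x u (v-1)) =
      (FF n x (u+1) (v+1) + FF n x (u+1) (v-1)) * FF n x u v"
      using D1 D2 by (simp add: algebra_simps)
    also have "\<dots> = FF n x (u+1) v * (c * FF n x u v)" using IH by simp
    finally show ?thesis .
  qed
  then have "FF n x u (v+1) + FF n x u (v-1) = c * FF n x u v" using P by simp
  then show ?case by (simp add: u_def c_def)
qed

end

theorem corollary7p2:
  fixes K :: "'a::field_char_0 set" and n :: nat and x :: "nat \<Rightarrow> 'a"
  assumes "n \<ge> 1"
    and "subring_set K"
    and "alg_indep K (n + 1) x"
  shows "\<forall>i::nat. i \<le> (n + 1) - 2 \<longrightarrow>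
           xA n x (int i + 2) 0 = xA n x 1 (i + 1) * xA n x (int i + 1) 0 - xA n x (int i) 0
         \<and> xA n x (int i + 1) 1 = xA n x 1 (i + 1) * xA n x (int i) 1 - xA n x (int i - 1) 1"
proof (intro allI impI)
  fix i :: nat
  assume i: "i \<le> (n + 1) - 2"
  have v: "1 \<le> i + 1" "i + 1 \<le> n" using i assms(1) by auto
  have G0: "FF n x 0 (i+2) + FF n x 0 i = FF n x (i+1) (i+2) * FF n x 0 (i+1)"
    using GG[OF assms(2,3) v, of "i+1"] by simp
  have G1: "FF n x 1 (i+2) + FF n x 1 i = FF n x (i+1) (i+2) * FF n x 1 (i+1)"
    using GG[OF assms(2,3) v, of i] by simp
  have c: "FF n x 0 (i+2) = xA n x (int i + 2) 0" "FF n x (i+1) (i+2) = xA n x 1 (i + 1)"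
    "FF n x 0 (i+1) = xA n x (int i + 1) 0" "FF n x 0 i = xA n x (int i) 0"
    "FF n x 1 (i+2) = xA n x (int i + 1) 1" "FF n x 1 (i+1) = xA n x (int i) 1"
    "FF n x 1 i = xA n x (int i - 1) 1"
    by (simp_all add: FF_def ac_simps)
  show "xA n x (int i + 2) 0 = xA n x 1 (i + 1) * xA n x (int i + 1) 0 - xA n x (int i) 0
         \<and> xA n x (int i + 1) 1 = xA n x 1 (i + 1) * xA n x (int i) 1 - xA n x (int i - 1) 1"
  proof
    have "xA n x (int i + 2) 0 + xA n x (int i) 0 = xA n x 1 (i + 1) * xA n x (int i + 1) 0"
      using G0 unfolding c .
    then show "xA n x (int i + 2) 0 = xA n x 1 (i + 1) * xA n x (int i + 1) 0 - xA n x (int i) 0"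
      by (simp add: eq_diff_eq)
  next
    have "xA n x (int i + 1) 1 + xA n x (int i - 1) 1 = xA n x 1 (i + 1) * xA n x (int i) 1"
      using G1 unfolding c .
    then show "xA n x (int i + 1) 1 = xA n x 1 (i + 1) * xA n x (int i) 1 - xA n x (int i - 1) 1"
      by (simp add: eq_diff_eq)
  qed
qed

end
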